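(* There is an absolute constant $C>0$ such that for every integer $k\ge 2$, all real $x \ge 1$ and all real $y$ with $1 \le y \le x$, \[ \#\{\, n \text{ $k$-full} : x < n \le x+y,\ p^+(n) \le y^{1/2}\,\} \le \#\{\, n \text{ squarefull} : x < n \le x+y,\ p^+(n) \le y^{1/2}\,\} \le C\, y^{11/12}. \]
   Context: A positive integer $n$ is $k$-full if every prime $p$ dividing $n$ satisfies $p^k \mid n$; squarefull means $2$-full. For an integer $n \ge 2$, $p^+(n)$ denotes the largest prime factor of $n$, with the convention $p^+(1)=1$. *)

theory Defs
  imports "HOL-Computational_Algebra.Primes" Complex_Main
begin

definition k_full :: "nat \<Rightarrow> nat \<Rightarrow> bool" where
  "k_full k n \<longleftrightarrow> n > 0 \<and> (\<forall>p. prime p \<longrightarrow> p dvd n \<longrightarrow> p ^ k dvd n)"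

abbreviation squarefull :: "nat \<Rightarrow> bool" where
  "squarefull n \<equiv> k_full 2 n"

text \<open>Largest prime factor, with the convention that it equals 1 for n = 1.\<close>
definition largest_pf :: "nat \<Rightarrow> nat" where
  "largest_pf n = (if prime_factors n = {} then 1 else Max (prime_factors n))"

end

theory Submission imports Defs begin

lemma lpf:
  assumes "n > 0" "prime p" "p dvd n" shows "p \<le> largest_pf n"
proof -
  have "p \<in> prime_factors n" using assms by (auto simp: in_prime_factors_iff)
  then show ?thesis unfolding largest_pf_def by auto
qed

lemma sq_part:
  assumes "squarefull n" shows "\<exists>m. m^2 dvd n \<and> n dvd m^3"
proof -
  have n0: "n > 0" using assms by (simp add: k_full_def)
  define e where "e p = multiplicity p n div 2" for p
  define m where "m = (\<Prod>p\<in>prime_factors n. p ^ e p)"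
  have m2: "m^2 = (\<Prod>p\<in>prime_factors n. p ^ (2 * e p))"
    unfolding m_def by (simp add: prod_power_distrib power_mult[symmetric] mult.commute)
  have m3: "m^3 = (\<Prod>p\<in>prime_factors n. p ^ (3 * e p))"
    unfolding m_def by (simp add: prod_power_distrib power_mult[symmetric] mult.commute)
  have mult2: "multiplicity p (m^2) = (if p \<in> prime_factors n then 2 * e p else 0)" if "prime p" for p
    unfolding m2 by (rule multiplicity_prod_prime_powers) (auto simp: that)
  have mult3: "multiplicity p (m^3) = (if p \<in> prime_factors n then 3 * e p else 0)" if "prime p" for p
    unfolding m3 by (rule multiplicity_prod_prime_powers) (auto simp: that)
  have "m \<noteq> 0" unfolding m_def by (auto simp: in_prime_factors_iff)
  have "m^2 dvd n"
  proof (rule multiplicity_le_imp_dvd)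
    show "m^2 \<noteq> 0" using \<open>m \<noteq> 0\<close> by simp
    fix p :: nat assume "prime p"
    then show "multiplicity p (m^2) \<le> multiplicity p n" by (simp add: mult2 e_def)
  qed
  moreover have "n dvd m^3"
  proof (rule multiplicity_le_imp_dvd)
    show "n \<noteq> 0" using n0 by simp
    fix p :: nat assume p: "prime p"
    show "multiplicity p n \<le> multiplicity p (m^3)"
    proof (cases "p \<in> prime_factors n")
      case True
      then have "p dvd n" by auto
      then have "p^2 dvd n" using assms p by (simp add: k_full_def)
      then have "2 \<le> multiplicity p n" using n0 p by (intro multiplicity_geI) auto
      then show ?thesis using True p by (simp add: mult3 e_def)
    next
      case False
      then have "\<not> p dvd n" using p n0 by (auto simp: in_prime_factors_iff)
      then have "multiplicity p n = 0" by (simp add: not_dvd_imp_multiplicity_0)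
      then show ?thesis by simp
    qed
  qed
  ultimately show ?thesis by blast
qed

lemma greedy:
  fixes P :: real
  assumes "m > 0" "\<And>p. prime p \<Longrightarrow> p dvd m \<Longrightarrow> real p \<le> P" "1 \<le> P" "A \<le> m" "1 \<le> A"
  shows "\<exists>d. d dvd m \<and> A \<le> d \<and> real d \<le> real A * P"
proof -
  define d where "d = (LEAST d. d dvd m \<and> A \<le> d)"
  have dP: "d dvd m \<and> A \<le> d" unfolding d_def by (rule LeastI[of _ m]) (use assms in auto)
  have dmin: "\<And>e. e dvd m \<and> A \<le> e \<Longrightarrow> d \<le> e" unfolding d_def by (rule Least_le)
  have "real d \<le> real A * P"
  proof (cases "d = 1")
    case True
    then have "A \<le> 1" using dP by simp
    then show ?thesis
      using True assms(3,5) by simp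
  next
    case False
    have "d \<noteq> 0" using dP assms(1) by auto
    then obtain p where p: "prime p" "p dvd d" using False prime_factor_nat by blast
    then obtain e where de: "d = p * e" by auto
    have "e dvd m" using dP de by (metis dvd_mult_right dvd_trans)
    have "e < d" using de p \<open>d \<noteq> 0\<close> using prime_gt_1_nat[OF p(1)] by simp
    then have "e < A" using dmin[of e] \<open>e dvd m\<close> by fastforce
    have "real p \<le> P" using assms(2) p dP by (meson dvd_trans)
    have "real d = real p * real e" using de by simp
    also have "\<dots> \<le> P * real A" using \<open>real p \<le> P\<close> \<open>e < A\<close>
      by (intro mult_mono) auto
    finally show ?thesis by (simp add: mult.commute)
  qed
  then show ?thesis using dP by blast
qed

lemma mult_count:
  fixes x y :: real
  assumes "q \<ge> 1" "x \<ge> 0" "y \<ge> 0"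
  shows "real (card {n::nat. x < real n \<and> real n \<le> x + y \<and> q dvd n}) \<le> y / q + 1"
proof -
  define a where "a = nat \<lfloor>x / q\<rfloor>"
  define b where "b = nat \<lfloor>(x + y) / q\<rfloor>"
  have q0: "real q > 0" using assms by simp
  have sub: "{n::nat. x < real n \<and> real n \<le> x + y \<and> q dvd n} \<subseteq> (\<lambda>j. q * j) ` {a+1..b}"
  proof
    fix n assume n: "n \<in> {n::nat. x < real n \<and> real n \<le> x + y \<and> q dvd n}"
    then obtain j where j: "n = q * j" by auto
    have "x < real q * real j" using n j by simp
    then have "x / q < real j" using q0 by (simp add: divide_less_eq mult.commute)
    then have "\<lfloor>x / q\<rfloor> < int j" by (simp add: floor_less_iff)
    moreover have "0 \<le> \<lfloor>x / q\<rfloor>" using assms by simp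
    ultimately have "a < j" unfolding a_def by (simp add: nat_less_iff)
    moreover have "real q * real j \<le> x + y" using n j by simp
    then have "real j \<le> (x + y) / q" using q0 by (simp add: le_divide_eq mult.commute)
    then have "j \<le> b" unfolding b_def by (rule le_nat_floor)
    ultimately show "n \<in> (\<lambda>j. q * j) ` {a+1..b}" using j by auto
  qed
  have "card {n::nat. x < real n \<and> real n \<le> x + y \<and> q dvd n} \<le> card ((\<lambda>j. q * j) ` {a+1..b})"
    by (rule card_mono[OF _ sub]) auto
  also have "\<dots> \<le> card {a+1..b}" by (rule card_image_le) auto
  also have "\<dots> = b - a" by simp
  finally have c: "card {n::nat. x < real n \<and> real n \<le> x + y \<and> q dvd n} \<le> b - a" .
  have f1: "0 \<le> \<lfloor>(x + y) / q\<rfloor>" "0 \<le> \<lfloor>x / q\<rfloor>" using assms by simp_all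
  have "real b \<le> (x + y) / q" unfolding b_def using f1 by simp
  moreover have "x / q - 1 < real a" unfolding a_def using f1 by linarith
  ultimately have "real (b - a) \<le> y / q + 1"
    by (cases "a \<le> b") (auto simp: of_nat_diff add_divide_distrib diff_divide_distrib, smt (verit) divide_nonneg_nonneg of_nat_0_le_iff assms(3))
  then show ?thesis using c by (smt (verit) of_nat_le_iff)
qed

lemma tele:
  assumes "A \<ge> 1"
  shows "(\<Sum>d\<in>{A..<A+k}. 1 / real d ^ 2) \<le> 2 / real A - 2 / real (A + k)"
proof (induction k)
  case 0 then show ?case by simp
next
  case (Suc k)
  have "1 / real (A+k) ^ 2 \<le> 2 / real (A + k) - 2 / real (A + Suc k)"
  proof -
    have p: "real (A+k) \<ge> 1" using assms by simp
    have "2 / real (A + k) - 2 / real (A + Suc k) = 2 / (real (A+k) * (real (A+k) + 1))"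
      using p by (simp add: field_simps)
    also have "\<dots> \<ge> 1 / real (A+k)^2"
    proof -
      define t where "t = real (A+k)"
      have t: "t \<ge> 1" using p t_def by simp
      have "1 / t^2 \<le> 2 / (t * (t+1))"
        using t by (simp add: divide_simps power2_eq_square)
      then show ?thesis by (simp add: t_def)
    qed
    finally show ?thesis .
  qed
  then show ?case using Suc by simp
qed
lemma tele2:
  assumes "A \<ge> 1"
  shows "(\<Sum>d\<in>{A..B}. 1 / real d ^ 2) \<le> 2 / real A"
proof -
  have "(\<Sum>d\<in>{A..B}. 1 / real d ^ 2) \<le> (\<Sum>d\<in>{A..<A+(B+1)}. 1 / real d ^ 2)"
    by (rule sum_mono2) auto
  also have "\<dots> \<le> 2 / real A - 2 / real (A + (B+1))" by (rule tele[OF assms])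
  also have "\<dots> \<le> 2 / real A" by simp
  finally show ?thesis .
qed


lemma kfull_sq: "k \<ge> 2 \<Longrightarrow> k_full k n \<Longrightarrow> squarefull n"
  unfolding k_full_def by (meson dvd_trans le_imp_power_dvd)

lemma main_bound:
  fixes x y :: real
  assumes x1: "1 \<le> x" and y1: "1 \<le> y" and yx: "y \<le> x"
  shows "real (card {n::nat. squarefull n \<and> x < real n \<and> real n \<le> x + y \<and> real (largest_pf n) \<le> y powr (1/2)})
          \<le> 4 * y powr (11/12)"
proof -
  define S where "S = {n::nat. squarefull n \<and> x < real n \<and> real n \<le> x + y \<and> real (largest_pf n) \<le> y powr (1/2)}"
  define P where "P = y powr (1/2)"
  define t where "t = y powr (1/4)"
  have y0: "y > 0" using y1 by simp
  have t1: "t \<ge> 1" unfolding t_def using y1 by (simp add: ge_one_powr_ge_zero)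
  have t4: "t^4 = y" unfolding t_def using y0
    by (simp add: powr_realpow[symmetric] powr_powr)
  have t2: "P = t^2" unfolding t_def P_def using y0
    by (simp add: powr_realpow[symmetric] powr_powr)
  have t3: "t^3 \<le> y powr (11/12)"
  proof -
    have "t^3 = y powr (3/4)" unfolding t_def using y0
      by (simp add: powr_realpow[symmetric] powr_powr)
    also have "\<dots> \<le> y powr (11/12)" using y1 by (intro powr_mono) auto
    finally show ?thesis .
  qed
  have P1: "P \<ge> 1" using t2 t1 by simp
  define A where "A = nat \<lceil>t\<rceil>"
  define B where "B = nat \<lfloor>real A * P\<rfloor>"
  have At: "t \<le> real A" unfolding A_def by linarith
  have At2: "real A < t + 1" unfolding A_def using t1 by linarith
  have A1: "A \<ge> 1" using At t1 by linarith
  define M where "M d = {n::nat. x < real n \<and> real n \<le> x + y \<and> d^2 dvd n}" for d :: nat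
  have sub: "S \<subseteq> (\<Union>d\<in>{A..B}. M d)"
  proof
    fix n assume nS: "n \<in> S"
    then have sf: "squarefull n" and xn: "x < real n" and nxy: "real n \<le> x + y"
      and lp: "real (largest_pf n) \<le> P" by (auto simp: S_def P_def)
    have n0: "n > 0" using sf by (simp add: k_full_def)
    obtain m where m2: "m^2 dvd n" and m3: "n dvd m^3" using sq_part[OF sf] by blast
    have m0: "m > 0"
    proof (rule ccontr)
      assume "\<not> m > 0"
      then have "m = 0" by simp
      with m2 have "n = 0" by simp
      with n0 show False by simp
    qed
    have "n \<le> m^3" using m3 m0 by (simp add: dvd_imp_le)
    then have "real n \<le> real m ^ 3" by (metis of_nat_le_iff of_nat_power)
    moreover have "real m ^ 3 \<le> real m ^ 4" using m0 by (intro power_increasing) auto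
    ultimately have "y < real m ^ 4" using xn yx by linarith
    then have "t^4 < real m ^ 4" using t4 by simp
    then have "t < real m" using power_less_imp_less_base by fastforce
    then have Am: "A \<le> m" unfolding A_def by simp
    have pm: "real p \<le> P" if "prime p" "p dvd m" for p
    proof -
      have "p dvd n" using that m2 by (meson dvd_trans dvd_power[of 2] zero_less_numeral)
      then have "p \<le> largest_pf n" using lpf n0 that by blast
      then show ?thesis using lp by linarith
    qed
    obtain d where d: "d dvd m" "A \<le> d" "real d \<le> real A * P"
      using greedy[OF m0 pm P1 Am A1] by blast
    have "d \<le> B" unfolding B_def using d(3) by (rule le_nat_floor)
    moreover have "d^2 dvd n" using d(1) m2 by (meson dvd_trans power_mono_iff dvd_power_same)
    ultimately show "n \<in> (\<Union>d\<in>{A..B}. M d)" using d(2) xn nxy by (auto simp: M_def)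
  qed
  have finM: "finite (M d)" for d
  proof -
    have "M d \<subseteq> {..nat \<lfloor>x + y\<rfloor>}" by (auto simp: M_def intro: le_nat_floor)
    then show ?thesis by (rule finite_subset) auto
  qed
  have "card S \<le> card (\<Union>d\<in>{A..B}. M d)"
    by (rule card_mono[OF _ sub]) (auto intro: finM)
  also have "\<dots> \<le> (\<Sum>d\<in>{A..B}. card (M d))" by (rule card_UN_le) auto
  finally have c1: "real (card S) \<le> (\<Sum>d\<in>{A..B}. real (card (M d)))"
    by (metis of_nat_le_iff of_nat_sum)
  have "(\<Sum>d\<in>{A..B}. real (card (M d))) \<le> (\<Sum>d\<in>{A..B}. y / real (d^2) + 1)"
  proof (rule sum_mono)
    fix d assume "d \<in> {A..B}"
    then have "d^2 \<ge> 1" using A1 by simp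
    then show "real (card (M d)) \<le> y / real (d^2) + 1"
      unfolding M_def using mult_count[of "d^2" x y] x1 y1 by simp
  qed
  also have "\<dots> = y * (\<Sum>d\<in>{A..B}. 1 / real d ^ 2) + real (card {A..B})"
    by (simp add: sum.distrib sum_distrib_left)
  also have "\<dots> \<le> y * (2 / real A) + real A * P"
  proof (rule add_mono)
    show "y * (\<Sum>d\<in>{A..B}. 1 / real d ^ 2) \<le> y * (2 / real A)"
      using tele2[OF A1] y0 by (intro mult_left_mono) auto
    have "real (card {A..B}) = real (Suc B - A)" by simp
    also have "\<dots> \<le> real A * P"
    proof (cases "A \<le> Suc B")
      case True
      have "real B \<le> real A * P" unfolding B_def using A1 P1
        by (smt (verit) mult_nonneg_nonneg of_int_floor_le of_nat_0_le_iff of_nat_nat zero_le_floor)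
      then show ?thesis using True A1 by (simp add: of_nat_diff)
    next
      case False
      then show ?thesis using P1 by simp
    qed
    finally show "real (card {A..B}) \<le> real A * P" .
  qed
  also have "\<dots> \<le> 4 * t^3"
  proof -
    have "y * (2 / real A) \<le> 2 * t^3"
    proof -
      have "y * (2 / real A) = 2 * t^4 / real A" using t4 by simp
      also have "\<dots> \<le> 2 * t^4 / t" using At t1 by (intro divide_left_mono) auto
      also have "\<dots> = 2 * t^3" using t1 by (simp add: power_eq_if)
      finally show ?thesis .
    qed
    moreover have "real A * P \<le> 2 * t^3"
    proof -
      have "real A * P \<le> (t + 1) * t^2" unfolding t2 using At2 by (intro mult_right_mono) auto
      also have "\<dots> \<le> 2 * t^3" using t1 by (simp add: power_eq_if algebra_simps)
      finally show ?thesis .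
    qed
    ultimately show ?thesis by linarith
  qed
  finally show ?thesis using c1 t3 unfolding S_def by linarith
qed

theorem theorem3:
  "\<exists>C::real. C > 0 \<and>
     (\<forall>(k::nat) (x::real) (y::real). k \<ge> 2 \<longrightarrow> 1 \<le> x \<longrightarrow> 1 \<le> y \<longrightarrow> y \<le> x \<longrightarrow>
        card {n::nat. k_full k n \<and> x < real n \<and> real n \<le> x + y \<and> real (largest_pf n) \<le> y powr (1/2)}
          \<le> card {n::nat. squarefull n \<and> x < real n \<and> real n \<le> x + y \<and> real (largest_pf n) \<le> y powr (1/2)}
        \<and> real (card {n::nat. squarefull n \<and> x < real n \<and> real n \<le> x + y \<and> real (largest_pf n) \<le> y powr (1/2)})
          \<le> C * y powr (11/12))"
proof (intro exI[of _ 4] conjI allI impI)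
  fix k :: nat and x y :: real
  assume k: "2 \<le> k" and x1: "1 \<le> x" and y1: "1 \<le> y" and yx: "y \<le> x"
  have fin: "finite {n::nat. squarefull n \<and> x < real n \<and> real n \<le> x + y \<and> real (largest_pf n) \<le> y powr (1/2)}"
  proof -
    have "{n::nat. squarefull n \<and> x < real n \<and> real n \<le> x + y \<and> real (largest_pf n) \<le> y powr (1/2)} \<subseteq> {..nat \<lfloor>x + y\<rfloor>}"
      by (auto intro: le_nat_floor)
    then show ?thesis by (rule finite_subset) auto
  qed
  show "card {n::nat. k_full k n \<and> x < real n \<and> real n \<le> x + y \<and> real (largest_pf n) \<le> y powr (1/2)}
          \<le> card {n::nat. squarefull n \<and> x < real n \<and> real n \<le> x + y \<and> real (largest_pf n) \<le> y powr (1/2)}"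
    by (rule card_mono[OF fin]) (auto intro: kfull_sq[OF k])
  show "real (card {n::nat. squarefull n \<and> x < real n \<and> real n \<le> x + y \<and> real (largest_pf n) \<le> y powr (1/2)})
          \<le> 4 * y powr (11/12)" by (rule main_bound[OF x1 y1 yx])
qed (simp)

end
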